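(* Let $\varpi$ be a minuscule fundamental weight, $\bar\phi\in W/W_{P_\varpi}$, $\phi$ the minimal length element of $\bar\phi$, $\phi=s_{\gamma_1}\cdots s_{\gamma_n}$ a reduced expression with simple roots $\gamma_k$, and $\beta_k=i(\gamma_k)$. Let $\beta$ be the unique simple root such that $\langle\beta^\vee,i(\varpi)\rangle=1$. Then $\beta_n=\beta$.
   Context: $G$ is a semisimple algebraic group with maximal torus $T$, Borel subgroup $B$, simple roots $S$, Weyl group $W$ with longest element $w_0$; $\alpha^\vee$ denotes the coroot of $\alpha$. The Weyl involution $i$ sends a simple root $\gamma$ to $-w_0(\gamma)$ and a fundamental weight $\varpi$ to $-w_0(\varpi)$. A fundamental weight $\varpi$ is minuscule if $\langle\alpha^\vee,\varpi\rangle\le1$ for all positive roots $\alpha$; $P_\varpi$ is the associated maximal parabolic subgroup and $W_{P_\varpi}$ its Weyl group. *)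

theory Defs
  imports "HOL-Analysis.Analysis"
begin

text \<open>Root data of a semisimple group, realised (as usual) in the real
Euclidean space spanned by the characters of the maximal torus.\<close>

definition cpair :: "'a::real_inner \<Rightarrow> 'a \<Rightarrow> real" where
  "cpair \<alpha> x = 2 * (x \<bullet> \<alpha>) / (\<alpha> \<bullet> \<alpha>)"   \<comment> \<open>the pairing between coroot of alpha and x\<close>

definition refl :: "'a::real_inner \<Rightarrow> 'a \<Rightarrow> 'a" where
  "refl \<alpha> x = x - cpair \<alpha> x *\<^sub>R \<alpha>"

definition root_system :: "'a::euclidean_space set \<Rightarrow> bool" where
  "root_system R \<longleftrightarrow> finite R \<and> 0 \<notin> R \<and> span R = UNIV \<and>
     (\<forall>\<alpha>\<in>R. \<forall>\<beta>\<in>R. refl \<alpha> \<beta> \<in> R) \<and>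
     (\<forall>\<alpha>\<in>R. \<forall>\<beta>\<in>R. cpair \<alpha> \<beta> \<in> \<int>) \<and>
     (\<forall>\<alpha>\<in>R. \<forall>c::real. c *\<^sub>R \<alpha> \<in> R \<longrightarrow> c = 1 \<or> c = -1)"

definition is_base :: "'a::euclidean_space set \<Rightarrow> 'a set \<Rightarrow> bool" where
  "is_base R S \<longleftrightarrow> S \<subseteq> R \<and> independent S \<and>
     (\<forall>\<alpha>\<in>R. \<exists>c::'a \<Rightarrow> int. \<alpha> = (\<Sum>\<gamma>\<in>S. of_int (c \<gamma>) *\<^sub>R \<gamma>) \<and>
         ((\<forall>\<gamma>\<in>S. c \<gamma> \<ge> 0) \<or> (\<forall>\<gamma>\<in>S. c \<gamma> \<le> 0)))"

definition pos_roots :: "'a::euclidean_space set \<Rightarrow> 'a set \<Rightarrow> 'a set" where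
  "pos_roots R S = {\<alpha>\<in>R. \<exists>c::'a \<Rightarrow> int. \<alpha> = (\<Sum>\<gamma>\<in>S. of_int (c \<gamma>) *\<^sub>R \<gamma>) \<and>
         (\<forall>\<gamma>\<in>S. c \<gamma> \<ge> 0)}"

definition word_fun :: "'a::real_inner list \<Rightarrow> 'a \<Rightarrow> 'a" where
  "word_fun xs = foldr (\<lambda>\<gamma> f. refl \<gamma> \<circ> f) xs id"

definition weyl_group :: "'a::euclidean_space set \<Rightarrow> ('a \<Rightarrow> 'a) set" where
  "weyl_group R = {word_fun xs | xs. set xs \<subseteq> R}"

definition wlen :: "'a::euclidean_space set \<Rightarrow> ('a \<Rightarrow> 'a) \<Rightarrow> nat" where
  "wlen S w = (LEAST n. \<exists>xs. set xs \<subseteq> S \<and> length xs = n \<and> word_fun xs = w)"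

definition reduced_expr :: "'a::euclidean_space set \<Rightarrow> ('a \<Rightarrow> 'a) \<Rightarrow> 'a list \<Rightarrow> bool" where
  "reduced_expr S w xs \<longleftrightarrow> set xs \<subseteq> S \<and> word_fun xs = w \<and> length xs = wlen S w"

definition longest_elem :: "'a::euclidean_space set \<Rightarrow> 'a set \<Rightarrow> ('a \<Rightarrow> 'a) \<Rightarrow> bool" where
  "longest_elem R S w0 \<longleftrightarrow> w0 \<in> weyl_group R \<and> (\<forall>w\<in>weyl_group R. wlen S w \<le> wlen S w0)"

definition weyl_inv :: "('a::real_vector \<Rightarrow> 'a) \<Rightarrow> 'a \<Rightarrow> 'a" where
  "weyl_inv w0 x = - w0 x"

definition fund_weight :: "'a::euclidean_space set \<Rightarrow> 'a \<Rightarrow> bool" where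
  "fund_weight S \<omega> \<longleftrightarrow> (\<exists>\<alpha>\<in>S. \<forall>\<gamma>\<in>S. cpair \<gamma> \<omega> = (if \<gamma> = \<alpha> then 1 else 0))"

definition minuscule :: "'a::euclidean_space set \<Rightarrow> 'a set \<Rightarrow> 'a \<Rightarrow> bool" where
  "minuscule R S \<omega> \<longleftrightarrow> fund_weight S \<omega> \<and> (\<forall>\<alpha>\<in>pos_roots R S. cpair \<alpha> \<omega> \<le> 1)"

text \<open>Weyl group W_P of the maximal parabolic P_varpi: generated by the simple
reflections s_gamma with gamma simple and orthogonal to varpi.\<close>
definition parabolic_weyl :: "'a::euclidean_space set \<Rightarrow> 'a \<Rightarrow> ('a \<Rightarrow> 'a) set" where
  "parabolic_weyl S \<omega> = {word_fun xs | xs. set xs \<subseteq> {\<gamma>\<in>S. cpair \<gamma> \<omega> = 0}}"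

definition weyl_cosets :: "'a::euclidean_space set \<Rightarrow> 'a set \<Rightarrow> 'a \<Rightarrow> ('a \<Rightarrow> 'a) set set" where
  "weyl_cosets R S \<omega> = {(\<lambda>v. w \<circ> v) ` parabolic_weyl S \<omega> | w. w \<in> weyl_group R}"

end

theory Submission
  imports Defs
begin

lemma refl_linear: "linear (refl a)"
  unfolding refl_def cpair_def
  by (rule linearI) (auto simp: inner_add_left algebra_simps add_divide_distrib scaleR_add_left)

lemma refl_inner: "refl a x \<bullet> refl a y = x \<bullet> y"
proof (cases "a = 0")
  case True thus ?thesis by (simp add: refl_def cpair_def)
next
  case False
  hence "a \<bullet> a \<noteq> 0" by simp
  thus ?thesis unfolding refl_def cpair_def
    by (simp add: inner_diff_left inner_diff_right algebra_simps) (simp add: field_simps inner_commute)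
qed

lemma refl_refl[simp]: "refl a (refl a x) = x"
proof (cases "a = 0")
  case True thus ?thesis by (simp add: refl_def cpair_def)
next
  case False
  hence "a \<bullet> a \<noteq> 0" by simp
  thus ?thesis unfolding refl_def cpair_def
    by (simp add: inner_diff_left algebra_simps)
qed

lemma refl_self: "a \<noteq> 0 \<Longrightarrow> refl a a = - a"
  unfolding refl_def cpair_def by (simp add: algebra_simps scaleR_2)

lemma refl_uminus[simp]: "refl (- a) = refl a"
  unfolding refl_def cpair_def by (auto simp: fun_eq_iff)

lemma word_fun_Nil[simp]: "word_fun [] = id"
  by (simp add: word_fun_def)
lemma word_fun_Cons[simp]: "word_fun (a # xs) = refl a \<circ> word_fun xs"
  by (simp add: word_fun_def)
lemma word_fun_append: "word_fun (xs @ ys) = word_fun xs \<circ> word_fun ys"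
  by (induction xs) (auto simp: word_fun_def)

lemma word_fun_linear: "linear (word_fun xs)"
  by (induction xs) (auto intro: linear_compose[unfolded o_def] refl_linear simp: linear_id[unfolded id_def])

lemma word_fun_inner: "word_fun xs x \<bullet> word_fun xs y = x \<bullet> y"
  by (induction xs) (auto simp: refl_inner)

lemma word_fun_rev: "word_fun xs (word_fun (rev xs) x) = x"
  by (induction xs arbitrary: x) (auto simp: word_fun_append)

lemma word_fun_rev2: "word_fun (rev xs) (word_fun xs x) = x"
  using word_fun_rev[of "rev xs"] by simp

lemma cpair_word: "cpair (word_fun xs a) (word_fun xs x) = cpair a x"
  by (simp add: cpair_def word_fun_inner)

lemma refl_conj: "refl (word_fun xs a) (word_fun xs x) = word_fun xs (refl a x)"
proof -
  interpret linear "word_fun xs" by (rule word_fun_linear)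
  show ?thesis by (simp add: refl_def cpair_word diff scale)
qed

lemma refl_conj_word: "refl (word_fun xs a) = word_fun (xs @ [a] @ rev xs)"
proof
  fix x
  have "refl (word_fun xs a) x = refl (word_fun xs a) (word_fun xs (word_fun (rev xs) x))"
    by (simp add: word_fun_rev)
  also have "\<dots> = word_fun (xs @ [a] @ rev xs) x"
    by (simp add: refl_conj word_fun_append)
  finally show "refl (word_fun xs a) x = word_fun (xs @ [a] @ rev xs) x" .
qed

lemma discrete_ivt: "P (0::nat) \<Longrightarrow> \<not> P m \<Longrightarrow> \<exists>j<m. P j \<and> \<not> P (Suc j)"
proof (induction m)
  case 0 thus ?case by simp
next
  case (Suc m)
  thus ?case by (cases "P m") (auto intro: less_SucI)
qed

locale rs =
  fixes R S :: "'a::euclidean_space set"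
  assumes rsys: "root_system R" and base: "is_base R S"
begin

lemma finR: "finite R" using rsys by (simp add: root_system_def)
lemma zeroR: "0 \<notin> R" using rsys by (simp add: root_system_def)
lemma reflR: "\<alpha> \<in> R \<Longrightarrow> \<beta> \<in> R \<Longrightarrow> refl \<alpha> \<beta> \<in> R" using rsys by (simp add: root_system_def)
lemma cpairZ: "\<alpha> \<in> R \<Longrightarrow> \<beta> \<in> R \<Longrightarrow> cpair \<alpha> \<beta> \<in> \<int>" using rsys by (simp add: root_system_def)
lemma reduced: "\<alpha> \<in> R \<Longrightarrow> c *\<^sub>R \<alpha> \<in> R \<Longrightarrow> c = 1 \<or> c = -1" using rsys by (simp add: root_system_def)
lemma SR: "S \<subseteq> R" using base by (simp add: is_base_def)
lemma finS: "finite S" using SR finR finite_subset by blast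
lemma indepS: "independent S" using base by (simp add: is_base_def)
lemma repR: "\<alpha> \<in> R \<Longrightarrow> \<exists>c::'a \<Rightarrow> int. \<alpha> = (\<Sum>\<gamma>\<in>S. of_int (c \<gamma>) *\<^sub>R \<gamma>) \<and>
         ((\<forall>\<gamma>\<in>S. c \<gamma> \<ge> 0) \<or> (\<forall>\<gamma>\<in>S. c \<gamma> \<le> 0))" using base by (simp add: is_base_def)

lemma negR: "\<beta> \<in> R \<Longrightarrow> - \<beta> \<in> R"
proof -
  assume b: "\<beta> \<in> R"
  hence "\<beta> \<noteq> 0" using zeroR by auto
  thus ?thesis using reflR[OF b b] refl_self[of \<beta>] by simp
qed

lemma word_R: "set xs \<subseteq> R \<Longrightarrow> \<beta> \<in> R \<Longrightarrow> word_fun xs \<beta> \<in> R"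
  by (induction xs) (auto intro: reflR)

definition coord :: "'a \<Rightarrow> 'a \<Rightarrow> real" where
  "coord \<gamma> = (SOME g. linear g \<and> (\<forall>\<gamma>'\<in>S. g \<gamma>' = (if \<gamma>' = \<gamma> then 1 else 0)))"

lemma coord_ex: "\<exists>g::'a\<Rightarrow>real. linear g \<and> (\<forall>\<gamma>'\<in>S. g \<gamma>' = (if \<gamma>' = \<gamma> then 1 else 0))"
  by (rule linear_independent_extend[OF indepS, of "\<lambda>\<gamma>'. if \<gamma>' = \<gamma> then 1 else 0"])

lemma coord_linear: "linear (coord \<gamma>)"
  and coord_S: "\<gamma>' \<in> S \<Longrightarrow> coord \<gamma> \<gamma>' = (if \<gamma>' = \<gamma> then 1 else 0)"
proof -
  have "linear (coord \<gamma>) \<and> (\<forall>\<gamma>'\<in>S. coord \<gamma> \<gamma>' = (if \<gamma>' = \<gamma> then 1 else 0))"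
    unfolding coord_def by (rule someI_ex[OF coord_ex[of \<gamma>]])
  thus "linear (coord \<gamma>)" "\<gamma>' \<in> S \<Longrightarrow> coord \<gamma> \<gamma>' = (if \<gamma>' = \<gamma> then 1 else 0)" by auto
qed

lemma coord_sum: "\<gamma> \<in> S \<Longrightarrow> coord \<gamma> (\<Sum>\<gamma>'\<in>S. c \<gamma>' *\<^sub>R \<gamma>') = c \<gamma>"
proof -
  assume g: "\<gamma> \<in> S"
  interpret linear "coord \<gamma>" by (rule coord_linear)
  have "coord \<gamma> (\<Sum>\<gamma>'\<in>S. c \<gamma>' *\<^sub>R \<gamma>') = (\<Sum>\<gamma>'\<in>S. c \<gamma>' * coord \<gamma> \<gamma>')"
    by (simp add: sum scale)
  also have "\<dots> = (\<Sum>\<gamma>'\<in>S. if \<gamma>' = \<gamma> then c \<gamma> else 0)"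
    by (rule sum.cong) (auto simp: coord_S)
  also have "\<dots> = c \<gamma>" using g finS by simp
  finally show ?thesis .
qed

lemma coord_minus: "coord \<gamma> (- x) = - coord \<gamma> x"
  using coord_linear by (rule linear_neg)
lemma coord_diff: "coord \<gamma> (x - y) = coord \<gamma> x - coord \<gamma> y"
  using coord_linear by (rule linear_diff)
lemma coord_add: "coord \<gamma> (x + y) = coord \<gamma> x + coord \<gamma> y"
  using coord_linear by (rule linear_add)
lemma coord_scale: "coord \<gamma> (c *\<^sub>R x) = c * coord \<gamma> x"
  using linear_scale[OF coord_linear] by simp

lemma rep_coord: "\<beta> \<in> R \<Longrightarrow> \<beta> = (\<Sum>\<gamma>\<in>S. coord \<gamma> \<beta> *\<^sub>R \<gamma>)"
proof -
  assume "\<beta> \<in> R"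
  then obtain c :: "'a \<Rightarrow> int" where c: "\<beta> = (\<Sum>\<gamma>\<in>S. of_int (c \<gamma>) *\<^sub>R \<gamma>)" using repR by blast
  have "\<And>\<gamma>. \<gamma> \<in> S \<Longrightarrow> coord \<gamma> \<beta> = of_int (c \<gamma>)" using c coord_sum by metis
  hence "(\<Sum>\<gamma>\<in>S. coord \<gamma> \<beta> *\<^sub>R \<gamma>) = (\<Sum>\<gamma>\<in>S. of_int (c \<gamma>) *\<^sub>R \<gamma>)" by simp
  thus ?thesis using c by simp
qed

lemma coord_Ints: "\<beta> \<in> R \<Longrightarrow> \<gamma> \<in> S \<Longrightarrow> coord \<gamma> \<beta> \<in> \<int>"
proof -
  assume "\<beta> \<in> R" "\<gamma> \<in> S"
  then obtain c :: "'a \<Rightarrow> int" where c: "\<beta> = (\<Sum>\<gamma>\<in>S. of_int (c \<gamma>) *\<^sub>R \<gamma>)" using repR by blast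
  thus ?thesis using coord_sum[OF \<open>\<gamma> \<in> S\<close>, of "\<lambda>g. of_int (c g)"] by simp
qed

lemma root_signs: "\<beta> \<in> R \<Longrightarrow> (\<forall>\<gamma>\<in>S. coord \<gamma> \<beta> \<ge> 0) \<or> (\<forall>\<gamma>\<in>S. coord \<gamma> \<beta> \<le> 0)"
proof -
  assume "\<beta> \<in> R"
  then obtain c :: "'a \<Rightarrow> int" where c: "\<beta> = (\<Sum>\<gamma>\<in>S. of_int (c \<gamma>) *\<^sub>R \<gamma>)"
    and s: "(\<forall>\<gamma>\<in>S. c \<gamma> \<ge> 0) \<or> (\<forall>\<gamma>\<in>S. c \<gamma> \<le> 0)" using repR by blast
  have "\<And>\<gamma>. \<gamma> \<in> S \<Longrightarrow> coord \<gamma> \<beta> = of_int (c \<gamma>)" using c coord_sum by metis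
  thus ?thesis using s by auto
qed

abbreviation "Pos \<equiv> pos_roots R S"
abbreviation "Neg \<equiv> uminus ` pos_roots R S"

lemma pos_iff: "\<beta> \<in> Pos \<longleftrightarrow> \<beta> \<in> R \<and> (\<forall>\<gamma>\<in>S. coord \<gamma> \<beta> \<ge> 0)"
proof
  assume "\<beta> \<in> Pos"
  then obtain c :: "'a \<Rightarrow> int" where b: "\<beta> \<in> R" and c: "\<beta> = (\<Sum>\<gamma>\<in>S. of_int (c \<gamma>) *\<^sub>R \<gamma>)"
    and s: "\<forall>\<gamma>\<in>S. c \<gamma> \<ge> 0" unfolding pos_roots_def by blast
  have "\<And>\<gamma>. \<gamma> \<in> S \<Longrightarrow> coord \<gamma> \<beta> = of_int (c \<gamma>)" using c coord_sum by metis
  thus "\<beta> \<in> R \<and> (\<forall>\<gamma>\<in>S. coord \<gamma> \<beta> \<ge> 0)" using s b by auto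
next
  assume a: "\<beta> \<in> R \<and> (\<forall>\<gamma>\<in>S. coord \<gamma> \<beta> \<ge> 0)"
  then obtain c :: "'a \<Rightarrow> int" where c: "\<beta> = (\<Sum>\<gamma>\<in>S. of_int (c \<gamma>) *\<^sub>R \<gamma>)" using repR by blast
  have "\<And>\<gamma>. \<gamma> \<in> S \<Longrightarrow> coord \<gamma> \<beta> = of_int (c \<gamma>)" using c coord_sum by metis
  hence "\<forall>\<gamma>\<in>S. c \<gamma> \<ge> 0" using a by fastforce
  thus "\<beta> \<in> Pos" unfolding pos_roots_def using a c by blast
qed

lemma neg_iff: "\<beta> \<in> Neg \<longleftrightarrow> \<beta> \<in> R \<and> (\<forall>\<gamma>\<in>S. coord \<gamma> \<beta> \<le> 0)"
proof
  assume "\<beta> \<in> Neg"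
  then obtain p where "p \<in> Pos" "\<beta> = - p" by blast
  thus "\<beta> \<in> R \<and> (\<forall>\<gamma>\<in>S. coord \<gamma> \<beta> \<le> 0)" using pos_iff negR coord_minus by fastforce
next
  assume a: "\<beta> \<in> R \<and> (\<forall>\<gamma>\<in>S. coord \<gamma> \<beta> \<le> 0)"
  hence "- \<beta> \<in> Pos" using pos_iff negR coord_minus by fastforce
  thus "\<beta> \<in> Neg" by (metis image_eqI minus_minus)
qed

lemma R_cases: "\<beta> \<in> R \<Longrightarrow> \<beta> \<in> Pos \<or> \<beta> \<in> Neg"
  using root_signs pos_iff neg_iff by blast

lemma zero_coords: "\<beta> \<in> R \<Longrightarrow> \<forall>\<gamma>\<in>S. coord \<gamma> \<beta> = 0 \<Longrightarrow> False"
proof -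
  assume "\<beta> \<in> R" "\<forall>\<gamma>\<in>S. coord \<gamma> \<beta> = 0"
  hence "\<beta> = 0" using rep_coord[of \<beta>] by simp
  thus False using \<open>\<beta> \<in> R\<close> zeroR by simp
qed

lemma disj: "\<beta> \<in> Pos \<Longrightarrow> \<beta> \<in> Neg \<Longrightarrow> False"
  using pos_iff neg_iff zero_coords by (meson order_antisym)

lemma S_pos: "\<alpha> \<in> S \<Longrightarrow> \<alpha> \<in> Pos"
  using pos_iff SR coord_S by auto

lemma rep_single: "\<beta> \<in> R \<Longrightarrow> \<gamma> \<in> S \<Longrightarrow> \<forall>\<gamma>'\<in>S. \<gamma>' \<noteq> \<gamma> \<longrightarrow> coord \<gamma>' \<beta> = 0 \<Longrightarrow> \<beta> = coord \<gamma> \<beta> *\<^sub>R \<gamma>"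
proof -
  assume a: "\<beta> \<in> R" "\<gamma> \<in> S" "\<forall>\<gamma>'\<in>S. \<gamma>' \<noteq> \<gamma> \<longrightarrow> coord \<gamma>' \<beta> = 0"
  have "\<beta> = (\<Sum>\<gamma>'\<in>S. coord \<gamma>' \<beta> *\<^sub>R \<gamma>')" using rep_coord a by blast
  also have "\<dots> = (\<Sum>\<gamma>'\<in>S. if \<gamma>' = \<gamma> then coord \<gamma> \<beta> *\<^sub>R \<gamma> else 0)"
    by (rule sum.cong) (use a in auto)
  also have "\<dots> = coord \<gamma> \<beta> *\<^sub>R \<gamma>" using a finS by simp
  finally show ?thesis .
qed

lemma refl_pos: "\<alpha> \<in> S \<Longrightarrow> \<beta> \<in> Pos \<Longrightarrow> \<beta> \<noteq> \<alpha> \<Longrightarrow> refl \<alpha> \<beta> \<in> Pos"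
proof (rule ccontr)
  assume a: "\<alpha> \<in> S" "\<beta> \<in> Pos" "\<beta> \<noteq> \<alpha>" "refl \<alpha> \<beta> \<notin> Pos"
  have bR: "\<beta> \<in> R" using a pos_iff by blast
  have "refl \<alpha> \<beta> \<in> R" using a SR bR reflR by blast
  hence "refl \<alpha> \<beta> \<in> Neg" using R_cases a by blast
  hence n: "\<forall>\<gamma>\<in>S. coord \<gamma> (refl \<alpha> \<beta>) \<le> 0" using neg_iff by blast
  have "\<forall>\<gamma>'\<in>S. \<gamma>' \<noteq> \<alpha> \<longrightarrow> coord \<gamma>' \<beta> = 0"
  proof (intro ballI impI)
    fix g assume g: "g \<in> S" "g \<noteq> \<alpha>"
    have "coord g (refl \<alpha> \<beta>) = coord g \<beta>"
      unfolding refl_def using g a by (simp add: coord_diff coord_scale coord_S)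
    thus "coord g \<beta> = 0" using n g a(2) pos_iff by force
  qed
  hence eq: "\<beta> = coord \<alpha> \<beta> *\<^sub>R \<alpha>" using rep_single bR a by blast
  have "\<alpha> \<in> R" using a SR by blast
  moreover have "coord \<alpha> \<beta> *\<^sub>R \<alpha> \<in> R" using eq bR by simp
  ultimately have "coord \<alpha> \<beta> = 1 \<or> coord \<alpha> \<beta> = -1" using reduced by blast
  moreover have "coord \<alpha> \<beta> \<ge> 0" using a pos_iff by blast
  ultimately have "\<beta> = \<alpha>" using eq by auto
  thus False using a by blast
qed

definition ht :: "'a \<Rightarrow> real" where "ht x = (\<Sum>\<gamma>\<in>S. coord \<gamma> x)"

lemma exists_pos_inner: "\<beta> \<in> Pos \<Longrightarrow> \<exists>\<gamma>\<in>S. coord \<gamma> \<beta> > 0 \<and> \<beta> \<bullet> \<gamma> > 0"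
proof (rule ccontr)
  assume a: "\<beta> \<in> Pos" "\<not> (\<exists>\<gamma>\<in>S. coord \<gamma> \<beta> > 0 \<and> \<beta> \<bullet> \<gamma> > 0)"
  have bR: "\<beta> \<in> R" using a pos_iff by blast
  hence "\<beta> \<noteq> 0" using zeroR by auto
  hence "\<beta> \<bullet> \<beta> > 0" by simp
  also have "\<beta> \<bullet> \<beta> = \<beta> \<bullet> (\<Sum>\<gamma>\<in>S. coord \<gamma> \<beta> *\<^sub>R \<gamma>)" using rep_coord[OF bR] by simp
  also have "\<dots> = (\<Sum>\<gamma>\<in>S. coord \<gamma> \<beta> * (\<beta> \<bullet> \<gamma>))" by (simp add: inner_sum_right)
  also have "\<dots> \<le> 0"
  proof (rule sum_nonpos)
    fix g assume "g \<in> S"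
    hence "coord g \<beta> \<ge> 0" "\<not> (coord g \<beta> > 0 \<and> \<beta> \<bullet> g > 0)" using a pos_iff by auto
    thus "coord g \<beta> * (\<beta> \<bullet> g) \<le> 0"
      by (metis less_eq_real_def mult_nonneg_nonpos mult_zero_left not_le)
  qed
  finally show False by simp
qed

end

context rs begin

lemma ht_Ints: "\<beta> \<in> R \<Longrightarrow> ht \<beta> \<in> \<int>"
  unfolding ht_def using coord_Ints by (auto intro: Ints_sum)

lemma ht_nonneg: "\<beta> \<in> Pos \<Longrightarrow> ht \<beta> \<ge> 0"
  unfolding ht_def using pos_iff by (auto intro: sum_nonneg)

lemma ht_S: "\<gamma> \<in> S \<Longrightarrow> ht \<gamma> = 1"
proof -
  assume g: "\<gamma> \<in> S"
  have "ht \<gamma> = (\<Sum>\<gamma>'\<in>S. if \<gamma> = \<gamma>' then 1 else 0)"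
    unfolding ht_def by (rule sum.cong) (auto simp: coord_S g)
  also have "\<dots> = 1" using g finS by simp
  finally show ?thesis .
qed

lemma ht_refl: "ht (refl \<gamma> \<beta>) = ht \<beta> - cpair \<gamma> \<beta> * ht \<gamma>"
  unfolding ht_def refl_def by (simp add: coord_diff coord_scale sum_subtractf sum_distrib_left)

lemma conj_simple: "\<beta> \<in> Pos \<Longrightarrow> \<exists>xs \<alpha>. set xs \<subseteq> S \<and> \<alpha> \<in> S \<and> \<beta> = word_fun xs \<alpha>"
proof (induction "nat \<lfloor>ht \<beta>\<rfloor>" arbitrary: \<beta> rule: less_induct)
  case less
  show ?case
  proof (cases "\<beta> \<in> S")
    case True
    show ?thesis by (rule exI[of _ "[]"]) (use True in auto)
  next
    case False
    obtain \<gamma> where g: "\<gamma> \<in> S" "coord \<gamma> \<beta> > 0" "\<beta> \<bullet> \<gamma> > 0"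
      using exists_pos_inner[OF less.prems] by blast
    have bR: "\<beta> \<in> R" using less.prems pos_iff by blast
    have gR: "\<gamma> \<in> R" using g SR by blast
    have ne: "\<beta> \<noteq> \<gamma>" using False g by blast
    define \<beta>' where "\<beta>' = refl \<gamma> \<beta>"
    have bp: "\<beta>' \<in> Pos" unfolding \<beta>'_def by (rule refl_pos[OF g(1) less.prems ne])
    have "\<gamma> \<noteq> 0" using gR zeroR by auto
    hence "\<gamma> \<bullet> \<gamma> > 0" by simp
    hence kpos: "cpair \<gamma> \<beta> > 0" unfolding cpair_def using g(3) by simp
    have kZ: "cpair \<gamma> \<beta> \<in> \<int>" using cpairZ gR bR by blast
    have k1: "cpair \<gamma> \<beta> \<ge> 1"
    proof -
      obtain k where k: "cpair \<gamma> \<beta> = of_int k" using kZ Ints_cases by blast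
      thus ?thesis using kpos by simp
    qed
    have h: "ht \<beta>' \<le> ht \<beta> - 1" unfolding \<beta>'_def using ht_refl ht_S[OF g(1)] k1 by simp
    have h0: "ht \<beta>' \<ge> 0" using ht_nonneg bp by blast
    have "nat \<lfloor>ht \<beta>'\<rfloor> < nat \<lfloor>ht \<beta>\<rfloor>"
    proof -
      obtain a where a: "ht \<beta> = of_int a" using ht_Ints[OF bR] Ints_cases by blast
      obtain b where b: "ht \<beta>' = of_int b" using ht_Ints bp pos_iff Ints_cases by metis
      show ?thesis using a b h h0 by simp
    qed
    then obtain xs \<alpha> where xs: "set xs \<subseteq> S" "\<alpha> \<in> S" "\<beta>' = word_fun xs \<alpha>"
      using less.hyps bp by blast
    have "\<beta> = refl \<gamma> \<beta>'" unfolding \<beta>'_def by simp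
    hence "\<beta> = word_fun (\<gamma> # xs) \<alpha>" using xs by simp
    thus ?thesis using xs g by (intro exI[of _ "\<gamma> # xs"] exI[of _ \<alpha>]) auto
  qed
qed

lemma refl_in_WS: "\<beta> \<in> R \<Longrightarrow> \<exists>zs. set zs \<subseteq> S \<and> word_fun zs = refl \<beta>"
proof -
  assume bR: "\<beta> \<in> R"
  obtain p where p: "p \<in> Pos" "refl p = refl \<beta>"
  proof (cases "\<beta> \<in> Pos")
    case True thus ?thesis using that by blast
  next
    case False
    then obtain q where "q \<in> Pos" "\<beta> = - q" using R_cases bR by blast
    thus ?thesis using that by simp
  qed
  obtain xs \<alpha> where xs: "set xs \<subseteq> S" "\<alpha> \<in> S" "p = word_fun xs \<alpha>" using conj_simple p by blast
  have "refl \<beta> = word_fun (xs @ [\<alpha>] @ rev xs)" using p xs refl_conj_word by metis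
  thus ?thesis using xs by (intro exI[of _ "xs @ [\<alpha>] @ rev xs"]) auto
qed

lemma W_gen: "set xs \<subseteq> R \<Longrightarrow> \<exists>zs. set zs \<subseteq> S \<and> word_fun zs = word_fun xs"
proof (induction xs)
  case Nil thus ?case by (intro exI[of _ "[]"]) simp
next
  case (Cons a xs)
  have "set xs \<subseteq> R" using Cons.prems by simp
  then obtain zs where zs: "set zs \<subseteq> S" "word_fun zs = word_fun xs" using Cons.IH by blast
  have "a \<in> R" using Cons.prems by simp
  then obtain ys where ys: "set ys \<subseteq> S" "word_fun ys = refl a" using refl_in_WS by blast
  show ?case using zs ys by (intro exI[of _ "ys @ zs"]) (auto simp: word_fun_append)
qed

lemma deletion:
  assumes ys: "set ys \<subseteq> S" and a: "\<alpha> \<in> S" and neg: "word_fun ys \<alpha> \<in> Neg"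
  shows "\<exists>zs. set zs \<subseteq> S \<and> length zs < length ys \<and> word_fun zs = word_fun ys \<circ> refl \<alpha>"
proof -
  let ?P = "\<lambda>j. word_fun (drop j ys) \<alpha> \<in> Neg"
  have "?P 0" using neg by simp
  moreover have "\<not> ?P (length ys)"
  proof
    assume "?P (length ys)"
    hence "\<alpha> \<in> Neg" by simp
    thus False using S_pos[OF a] disj by blast
  qed
  ultimately obtain j where j: "j < length ys" "?P j" "\<not> ?P (Suc j)"
    using discrete_ivt[of ?P "length ys"] by blast
  define u where "u = drop (Suc j) ys"
  define b where "b = ys ! j"
  have dj: "drop j ys = b # u" unfolding u_def b_def using j(1) by (simp add: Cons_nth_drop_Suc)
  have bS: "b \<in> S" using ys j(1) b_def nth_mem by blast
  have uS: "set u \<subseteq> S" unfolding u_def using ys set_drop_subset by (rule order_trans[rotated])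
  have uR: "word_fun u \<alpha> \<in> R"
    using word_R[of u \<alpha>] uS SR a by blast
  have upos: "word_fun u \<alpha> \<in> Pos" using R_cases uR j(3) unfolding u_def by blast
  have "refl b (word_fun u \<alpha>) \<in> Neg" using j(2) dj by simp
  hence ub: "word_fun u \<alpha> = b" using refl_pos[OF bS upos] disj by metis
  have ysd: "ys = take j ys @ b # u" using dj by (metis append_take_drop_id)
  have "word_fun ys \<circ> refl \<alpha> = word_fun (take j ys @ u)"
  proof
    fix x
    have "(word_fun ys \<circ> refl \<alpha>) x = word_fun (take j ys) (refl b (word_fun u (refl \<alpha> x)))"
      by (subst ysd) (simp add: word_fun_append)
    also have "\<dots> = word_fun (take j ys) (word_fun u (refl \<alpha> (refl \<alpha> x)))"
      using refl_conj[of u \<alpha>] ub by simp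
    also have "\<dots> = word_fun (take j ys @ u) x" by (simp add: word_fun_append)
    finally show "(word_fun ys \<circ> refl \<alpha>) x = word_fun (take j ys @ u) x" .
  qed
  moreover have "length (take j ys @ u) < length ys" unfolding u_def using j(1) by simp
  moreover have "set (take j ys @ u) \<subseteq> S"
  proof -
    have "set (take j ys) \<subseteq> S" using ys set_take_subset by (rule order_trans[rotated])
    thus ?thesis using uS by simp
  qed
  ultimately show ?thesis by (intro exI[of _ "take j ys @ u"]) simp
qed

end

context rs begin

lemma wlen_word:
  assumes "set xs \<subseteq> S" "word_fun xs = w"
  shows "\<exists>ys. set ys \<subseteq> S \<and> length ys = wlen S w \<and> word_fun ys = w"
proof -
  have "\<exists>n xs. set xs \<subseteq> S \<and> length xs = n \<and> word_fun xs = w" using assms by blast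
  hence "\<exists>xs. set xs \<subseteq> S \<and> length xs = (LEAST n. \<exists>xs. set xs \<subseteq> S \<and> length xs = n \<and> word_fun xs = w) \<and> word_fun xs = w"
    by (rule LeastI_ex)
  thus ?thesis unfolding wlen_def .
qed

lemma wlen_le:
  assumes "set xs \<subseteq> S" "word_fun xs = w"
  shows "wlen S w \<le> length xs"
  unfolding wlen_def by (rule Least_le) (use assms in blast)

lemma longest_neg:
  assumes lw: "longest_elem R S w0" and a: "\<alpha> \<in> S"
  shows "w0 \<alpha> \<in> Neg"
proof (rule ccontr)
  assume nn: "w0 \<alpha> \<notin> Neg"
  from lw obtain xs where xs: "set xs \<subseteq> R" "w0 = word_fun xs"
    unfolding longest_elem_def weyl_group_def by blast
  obtain zs where zs: "set zs \<subseteq> S" "word_fun zs = w0" using W_gen xs by metis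
  obtain x0 where x0: "set x0 \<subseteq> S" "length x0 = wlen S w0" "word_fun x0 = w0"
    using wlen_word[OF zs] by blast
  have aR: "\<alpha> \<in> R" using a SR by blast
  have "w0 \<alpha> \<in> R" using word_R[OF xs(1) aR] xs(2) by simp
  hence wp: "w0 \<alpha> \<in> Pos" using R_cases nn by blast
  define w1 where "w1 = w0 \<circ> refl \<alpha>"
  have w1a: "w1 = word_fun (x0 @ [\<alpha>])" unfolding w1_def using x0 by (simp add: word_fun_append)
  have w1b: "w1 = word_fun (xs @ [\<alpha>])" unfolding w1_def using xs by (simp add: word_fun_append)
  have "set (xs @ [\<alpha>]) \<subseteq> R" using xs aR by simp
  hence "w1 \<in> weyl_group R" unfolding weyl_group_def using w1b by blast
  hence le: "wlen S w1 \<le> wlen S w0" using lw unfolding longest_elem_def by blast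
  have "set (x0 @ [\<alpha>]) \<subseteq> S" using x0 a by simp
  then obtain ys where ys: "set ys \<subseteq> S" "length ys = wlen S w1" "word_fun ys = w1"
    using wlen_word w1a by metis
  have lin: "linear w0" using xs word_fun_linear by simp
  have "word_fun ys \<alpha> = w0 (refl \<alpha> \<alpha>)" using ys w1_def by simp
  also have "\<dots> = w0 (- \<alpha>)"
  proof -
    have a0: "\<alpha> \<noteq> 0" using aR zeroR by blast
    show ?thesis using refl_self[OF a0] by simp
  qed
  also have "\<dots> = - w0 \<alpha>" using linear_neg[OF lin] by simp
  finally have "word_fun ys \<alpha> \<in> Neg" using wp by simp
  then obtain zs' where zs': "set zs' \<subseteq> S" "length zs' < length ys" "word_fun zs' = word_fun ys \<circ> refl \<alpha>"
    using deletion[OF ys(1) a] by blast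
  have "word_fun zs' = w0"
  proof
    fix x show "word_fun zs' x = w0 x" using zs'(3) ys(3) unfolding w1_def by simp
  qed
  hence "wlen S w0 \<le> length zs'" by (rule wlen_le[OF zs'(1)])
  thus False using zs' ys le by simp
qed

lemma longest_word: "longest_elem R S w0 \<Longrightarrow> \<exists>xs. set xs \<subseteq> R \<and> w0 = word_fun xs"
  unfolding longest_elem_def weyl_group_def by blast

lemma w0_pos:
  assumes lw: "longest_elem R S w0" and b: "\<beta> \<in> Pos"
  shows "w0 \<beta> \<in> Neg"
proof -
  obtain xs where xs: "set xs \<subseteq> R" "w0 = word_fun xs" using longest_word[OF lw] by blast
  have bR: "\<beta> \<in> R" using b pos_iff by blast
  interpret L: linear w0 using xs word_fun_linear by simp
  have "w0 \<beta> \<in> R" using word_R[OF xs(1) bR] xs(2) by simp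
  moreover have "\<forall>g\<in>S. coord g (w0 \<beta>) \<le> 0"
  proof
    fix g assume g: "g \<in> S"
    interpret C: linear "coord g" by (rule coord_linear)
    have "coord g (w0 \<beta>) = coord g (w0 (\<Sum>\<gamma>\<in>S. coord \<gamma> \<beta> *\<^sub>R \<gamma>))" using rep_coord[OF bR] by simp
    also have "\<dots> = (\<Sum>\<gamma>\<in>S. coord \<gamma> \<beta> * coord g (w0 \<gamma>))"
      by (simp add: L.sum L.scale C.sum C.scale)
    also have "\<dots> \<le> 0"
    proof (rule sum_nonpos)
      fix \<gamma> assume "\<gamma> \<in> S"
      hence "coord \<gamma> \<beta> \<ge> 0" "coord g (w0 \<gamma>) \<le> 0"
        using b pos_iff longest_neg[OF lw] neg_iff g by blast+
      thus "coord \<gamma> \<beta> * coord g (w0 \<gamma>) \<le> 0" by (rule mult_nonneg_nonpos)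
    qed
    finally show "coord g (w0 \<beta>) \<le> 0" .
  qed
  ultimately show ?thesis using neg_iff by blast
qed

lemma w0_inj: "longest_elem R S w0 \<Longrightarrow> inj w0"
proof -
  assume lw: "longest_elem R S w0"
  obtain xs where xs: "set xs \<subseteq> R" "w0 = word_fun xs" using longest_word[OF lw] by blast
  show "inj w0" unfolding xs(2) by (rule inj_on_inverseI[of _ "word_fun (rev xs)"]) (simp add: word_fun_rev2)
qed

lemma finPos: "finite Pos"
  using finR unfolding pos_roots_def by simp

lemma mw0_Pos:
  assumes lw: "longest_elem R S w0"
  shows "(\<lambda>x. - w0 x) ` Pos = Pos"
proof (rule endo_inj_surj[OF finPos])
  show "(\<lambda>x. - w0 x) ` Pos \<subseteq> Pos"
  proof
    fix y assume "y \<in> (\<lambda>x. - w0 x) ` Pos"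
    then obtain x where x: "x \<in> Pos" "y = - w0 x" by blast
    then obtain p where "p \<in> Pos" "w0 x = - p" using w0_pos[OF lw x(1)] by blast
    thus "y \<in> Pos" using x by simp
  qed
  show "inj_on (\<lambda>x. - w0 x) Pos"
    using w0_inj[OF lw] by (auto simp: inj_on_def inj_def)
qed

lemma indecomp:
  assumes a: "\<alpha> \<in> S" and p: "p \<in> Pos" and q: "q \<in> Pos" and e: "\<alpha> = p + q"
  shows False
proof -
  have pR: "p \<in> R" and qR: "q \<in> R" using p q pos_iff by auto
  have c: "\<And>g. g \<in> S \<Longrightarrow> coord g p + coord g q = (if g = \<alpha> then 1 else 0)"
  proof -
    fix g assume g: "g \<in> S"
    have "coord g \<alpha> = coord g p + coord g q" using e coord_add by simp
    thus "coord g p + coord g q = (if g = \<alpha> then 1 else 0)" using coord_S[OF a, of g] by auto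
  qed
  have nn: "\<And>g. g \<in> S \<Longrightarrow> coord g p \<ge> 0 \<and> coord g q \<ge> 0" using p q pos_iff by blast
  obtain i where i: "coord \<alpha> p = of_int i" using coord_Ints[OF pR a] Ints_cases by blast
  obtain j where j: "coord \<alpha> q = of_int j" using coord_Ints[OF qR a] Ints_cases by blast
  note ij = i j
  have "i + j = 1" "i \<ge> 0" "j \<ge> 0" using c[OF a] nn[OF a] ij by simp_all
  hence "i = 0 \<or> j = 0" by linarith
  hence "coord \<alpha> p = 0 \<or> coord \<alpha> q = 0" using ij by auto
  moreover have "\<And>g. g \<in> S \<Longrightarrow> g \<noteq> \<alpha> \<Longrightarrow> coord g p = 0 \<and> coord g q = 0"
  proof -
    fix g assume "g \<in> S" "g \<noteq> \<alpha>"
    thus "coord g p = 0 \<and> coord g q = 0" using c[of g] nn[of g] by simp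
  qed
  ultimately have "(\<forall>g\<in>S. coord g p = 0) \<or> (\<forall>g\<in>S. coord g q = 0)" by blast
  thus False using zero_coords pR qR by blast
qed

lemma strict_cs:
  fixes x y :: 'a
  assumes "y \<noteq> 0" "\<forall>t. x \<noteq> t *\<^sub>R y"
  shows "(x \<bullet> y)^2 < (x \<bullet> x) * (y \<bullet> y)"
proof -
  have le: "(x \<bullet> y)^2 \<le> (x \<bullet> x) * (y \<bullet> y)" by (rule Cauchy_Schwarz_ineq)
  have yy: "y \<bullet> y > 0" using assms by simp
  define t where "t = (x \<bullet> y) / (y \<bullet> y)"
  have "x - t *\<^sub>R y \<noteq> 0" using assms by simp
  hence "0 < (x - t *\<^sub>R y) \<bullet> (x - t *\<^sub>R y)" by simp
  also have "\<dots> = x \<bullet> x - 2 * t * (x \<bullet> y) + t^2 * (y \<bullet> y)"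
    by (simp add: inner_diff_left inner_diff_right inner_commute power2_eq_square algebra_simps)
  also have "\<dots> = x \<bullet> x - (x \<bullet> y)^2 / (y \<bullet> y)"
    unfolding t_def using yy by (simp add: power2_eq_square field_simps)
  finally have "(x \<bullet> y)^2 / (y \<bullet> y) < x \<bullet> x" by simp
  thus ?thesis using yy by (simp add: field_simps)
qed

lemma decomp:
  assumes d: "\<delta> \<in> Pos" and nS: "\<delta> \<notin> S"
  shows "\<exists>\<gamma>\<in>S. \<delta> - \<gamma> \<in> Pos"
proof -
  obtain \<gamma> where g: "\<gamma> \<in> S" "coord \<gamma> \<delta> > 0" "\<delta> \<bullet> \<gamma> > 0"
    using exists_pos_inner[OF d] by blast
  have dR: "\<delta> \<in> R" using d pos_iff by blast
  have gR: "\<gamma> \<in> R" using g SR by blast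
  have ne: "\<delta> \<noteq> \<gamma>" using g nS by blast
  have g0: "\<gamma> \<noteq> 0" and d0: "\<delta> \<noteq> 0" using gR dR zeroR by auto
  have np: "\<forall>t. \<delta> \<noteq> t *\<^sub>R \<gamma>"
  proof
    fix t show "\<delta> \<noteq> t *\<^sub>R \<gamma>"
    proof
      assume e: "\<delta> = t *\<^sub>R \<gamma>"
      hence "t = 1 \<or> t = -1" using reduced[OF gR] dR by simp
      moreover have "t \<noteq> 1" using e ne by auto
      moreover have "t \<noteq> -1"
      proof
        assume "t = -1"
        hence "\<delta> \<in> Neg" using e S_pos[OF g(1)] by simp
        thus False using d disj by blast
      qed
      ultimately show False by blast
    qed
  qed
  have cs: "(\<delta> \<bullet> \<gamma>)^2 < (\<delta> \<bullet> \<delta>) * (\<gamma> \<bullet> \<gamma>)" by (rule strict_cs[OF g0 np])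
  have gg: "\<gamma> \<bullet> \<gamma> > 0" and dd: "\<delta> \<bullet> \<delta> > 0" using g0 d0 by simp_all
  define a where "a = cpair \<gamma> \<delta>"
  define b where "b = cpair \<delta> \<gamma>"
  have apos: "a > 0" unfolding a_def cpair_def using g(3) gg by simp
  have bpos: "b > 0" unfolding b_def cpair_def using g(3) dd by (simp add: inner_commute)
  have ab: "a * b < 4"
  proof -
    have "a * b = 4 * (\<delta> \<bullet> \<gamma>)^2 / ((\<delta> \<bullet> \<delta>) * (\<gamma> \<bullet> \<gamma>))"
      unfolding a_def b_def cpair_def by (simp add: inner_commute power2_eq_square field_simps)
    also have "\<dots> < 4" using cs gg dd by (simp add: field_simps)
    finally show ?thesis .
  qed
  obtain ka where ka: "a = of_int ka" using cpairZ[OF gR dR] Ints_cases a_def by metis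
  obtain kb where kb: "b = of_int kb" using cpairZ[OF dR gR] Ints_cases b_def by metis
  have k1: "ka \<ge> 1" using ka apos by simp
  have k2: "kb \<ge> 1" using kb bpos by simp
  have "of_int (ka * kb) < (4::real)" using ab ka kb by simp
  hence k3: "ka * kb < 4" by (simp only: of_int_mult[symmetric] of_int_less_numeral_iff)
  from k1 k2 k3 have "ka \<ge> 1" "kb \<ge> 1" "ka * kb < 4" by blast+
  hence "ka = 1 \<or> kb = 1"
  proof -
    assume h: "ka \<ge> 1" "kb \<ge> 1" "ka * kb < 4"
    show "ka = 1 \<or> kb = 1"
    proof (rule ccontr)
      assume "\<not> (ka = 1 \<or> kb = 1)"
      hence "ka \<ge> 2" "kb \<ge> 2" using h by auto
      hence "ka * kb \<ge> 2 * 2" by (intro mult_mono) auto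
      thus False using h by simp
    qed
  qed
  hence "a = 1 \<or> b = 1" using ka kb by auto
  hence dgR: "\<delta> - \<gamma> \<in> R"
  proof
    assume "a = 1"
    hence "refl \<gamma> \<delta> = \<delta> - \<gamma>" unfolding refl_def a_def by simp
    thus ?thesis using reflR[OF gR dR] by simp
  next
    assume "b = 1"
    hence "refl \<delta> \<gamma> = \<gamma> - \<delta>" unfolding refl_def b_def by simp
    hence "\<gamma> - \<delta> \<in> R" using reflR[OF dR gR] by simp
    from negR[OF this] show ?thesis by simp
  qed
  have "\<delta> - \<gamma> \<in> Pos"
  proof (rule ccontr)
    assume "\<delta> - \<gamma> \<notin> Pos"
    hence "\<delta> - \<gamma> \<in> Neg" using R_cases dgR by blast
    hence n: "\<forall>g'\<in>S. coord g' (\<delta> - \<gamma>) \<le> 0" using neg_iff by blast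
    have z: "\<forall>g'\<in>S. g' \<noteq> \<gamma> \<longrightarrow> coord g' \<delta> = 0"
    proof (intro ballI impI)
      fix g' assume g': "g' \<in> S" "g' \<noteq> \<gamma>"
      have "coord g' (\<delta> - \<gamma>) = coord g' \<delta>" using coord_diff coord_S[OF g(1), of g'] g' by simp
      moreover have "coord g' \<delta> \<ge> 0" using d pos_iff g' by blast
      ultimately show "coord g' \<delta> = 0" using n g' by force
    qed
    have "coord \<gamma> (\<delta> - \<gamma>) = coord \<gamma> \<delta> - 1" using coord_diff coord_S[OF g(1), of \<gamma>] by simp
    hence "coord \<gamma> \<delta> \<le> 1" using n g(1) by force
    moreover obtain k where "coord \<gamma> \<delta> = of_int k" using coord_Ints[OF dR g(1)] Ints_cases by blast
    ultimately have "coord \<gamma> \<delta> = 1" using g(2) by simp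
    hence "\<delta> = \<gamma>" using rep_single[OF dR g(1) z] by simp
    thus False using ne by blast
  qed
  thus ?thesis using g by blast
qed

lemma mw0_S:
  assumes lw: "longest_elem R S w0" and a: "\<alpha> \<in> S"
  shows "- w0 \<alpha> \<in> S"
proof (rule ccontr)
  assume nS: "- w0 \<alpha> \<notin> S"
  have dP: "- w0 \<alpha> \<in> Pos" using mw0_Pos[OF lw] S_pos[OF a] by blast
  obtain \<gamma> where g: "\<gamma> \<in> S" "- w0 \<alpha> - \<gamma> \<in> Pos" using decomp[OF dP nS] by blast
  obtain p' where p': "p' \<in> Pos" "- w0 \<alpha> - \<gamma> = - w0 p'" using g(2) mw0_Pos[OF lw] by (metis imageE)
  obtain g' where g': "g' \<in> Pos" "\<gamma> = - w0 g'" using S_pos[OF g(1)] mw0_Pos[OF lw] by (metis imageE)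
  obtain xs where xs: "set xs \<subseteq> R" "w0 = word_fun xs" using longest_word[OF lw] by blast
  interpret L: linear w0 using xs word_fun_linear by simp
  have "w0 \<alpha> = w0 (p' + g')" using p' g' by (simp add: L.add algebra_simps)
  hence "\<alpha> = p' + g'" using w0_inj[OF lw] by (simp add: inj_eq)
  thus False using indecomp[OF a p'(1) g'(1)] by blast
qed

lemma mw0_S_eq:
  assumes lw: "longest_elem R S w0"
  shows "(\<lambda>x. - w0 x) ` S = S"
  using finS mw0_S[OF lw] w0_inj[OF lw]
  by (intro endo_inj_surj) (auto simp: inj_on_def inj_def)

end

theorem mainTheorem4:
  fixes R S :: "'a::euclidean_space set" and \<omega> \<beta> :: 'a
    and w0 \<phi> :: "'a \<Rightarrow> 'a" and \<phi>bar :: "('a \<Rightarrow> 'a) set" and \<gamma>s :: "'a list"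
  assumes "root_system R" and "is_base R S"
    and "longest_elem R S w0"
    and "minuscule R S \<omega>"
    and "\<phi>bar \<in> weyl_cosets R S \<omega>"
    and "\<phi> \<in> \<phi>bar" and "\<forall>\<psi>\<in>\<phi>bar. wlen S \<phi> \<le> wlen S \<psi>"
    and "reduced_expr S \<phi> \<gamma>s" and "\<gamma>s \<noteq> []"
    and "\<beta> \<in> S" and "cpair \<beta> (weyl_inv w0 \<omega>) = 1"
  shows "weyl_inv w0 (last \<gamma>s) = \<beta>"
proof -
  interpret rs R S using assms(1,2) by unfold_locales
  note lw = assms(3)
  define g where "g = last \<gamma>s"
  define bs where "bs = butlast \<gamma>s"
  have gsd: "\<gamma>s = bs @ [g]" unfolding g_def bs_def using assms(9) by simp
  have red: "set \<gamma>s \<subseteq> S" "word_fun \<gamma>s = \<phi>" "length \<gamma>s = wlen S \<phi>"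
    using assms(8) unfolding reduced_expr_def by auto
  have gS: "g \<in> S" using red(1) gsd by simp
  have bsS: "set bs \<subseteq> S" using red(1) gsd by simp
  obtain a where a: "a \<in> S" "\<forall>\<gamma>\<in>S. cpair \<gamma> \<omega> = (if \<gamma> = a then 1 else 0)"
    using assms(4) unfolding minuscule_def fund_weight_def by blast
  have "cpair g \<omega> \<noteq> 0"
  proof
    assume g0: "cpair g \<omega> = 0"
    obtain w where w: "\<phi>bar = (\<lambda>v. w \<circ> v) ` parabolic_weyl S \<omega>"
      using assms(5) unfolding weyl_cosets_def by blast
    obtain v where v: "v \<in> parabolic_weyl S \<omega>" "\<phi> = w \<circ> v" using assms(6) w by blast
    obtain xs where xs: "set xs \<subseteq> {\<gamma>\<in>S. cpair \<gamma> \<omega> = 0}" "v = word_fun xs"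
      using v(1) unfolding parabolic_weyl_def by blast
    have "set (xs @ [g]) \<subseteq> {\<gamma>\<in>S. cpair \<gamma> \<omega> = 0}" using xs gS g0 by simp
    hence "word_fun (xs @ [g]) \<in> parabolic_weyl S \<omega>" unfolding parabolic_weyl_def by blast
    hence "w \<circ> word_fun (xs @ [g]) \<in> \<phi>bar" using w by blast
    moreover have "w \<circ> word_fun (xs @ [g]) = word_fun bs"
    proof
      fix x
      have "word_fun bs \<circ> refl g = \<phi>" using red(2) gsd by (simp add: word_fun_append)
      hence "\<phi> (refl g x) = word_fun bs (refl g (refl g x))" by auto
      hence "\<phi> (refl g x) = word_fun bs x" by simp
      thus "(w \<circ> word_fun (xs @ [g])) x = word_fun bs x" using v xs by (simp add: word_fun_append)
    qed
    ultimately have "word_fun bs \<in> \<phi>bar" by simp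
    hence "wlen S \<phi> \<le> wlen S (word_fun bs)" using assms(7) by blast
    also have "\<dots> \<le> length bs" by (rule wlen_le[OF bsS refl])
    finally show False using red(3) gsd by simp
  qed
  hence ga: "g = a" using a gS by (auto split: if_splits)
  obtain xs where xs: "set xs \<subseteq> R" "w0 = word_fun xs" using longest_word[OF lw] by blast
  interpret L: linear w0 using xs word_fun_linear by simp
  have "\<beta> \<in> (\<lambda>x. - w0 x) ` S" using mw0_S_eq[OF lw] assms(10) by simp
  then obtain \<delta> where d: "\<delta> \<in> S" "\<beta> = - w0 \<delta>" by blast
  have "cpair \<beta> (weyl_inv w0 \<omega>) = cpair (word_fun xs (- \<delta>)) (word_fun xs (- \<omega>))"
    using d xs L.neg unfolding weyl_inv_def by simp
  also have "\<dots> = cpair \<delta> \<omega>" by (simp only: cpair_word) (simp add: cpair_def)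
  finally have "cpair \<delta> \<omega> = 1" using assms(11) by simp
  hence "\<delta> = a" using a d(1) by (auto split: if_splits)
  thus ?thesis using d ga g_def unfolding weyl_inv_def by simp
qed

end
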